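(* Consider one seller with one item and $n$ ex-post rational buyers $N=\{1,\dots,n\}$; the item's quality $q\in Q=[q_1,q_2]$ has density $g$ and is observed only by the seller; buyer $i$'s valuation $v_i(q)$ is monotone increasing in $q$ with inverse $v_i^{-1}$. A fixed-price signaling mechanism is a pair $(\pi,p)$ where, for each $q$, $\pi(q,\cdot)$ is a probability distribution over the signals $s_0,s_1,\dots,s_n$ ($\pi(q,s_i)\ge0$, $\sum_{i\in N}\pi(q,s_i)+\pi(q,s_0)=1$); signal $s_i$ means buyer $i$ receives "1" (buy) and all others receive "0", and $s_0$ means all buyers receive "0". Then $(\pi,p)$ is obedient for all buyers (each ex-post rational buyer, after Bayesian updating on his own received signal, is almost surely willing to buy after receiving 1 and almost surely unwilling after receiving 0) if and only if for all $i\in N$: $\int_{q_1}^{v_i^{-1}(p)}\pi(q,s_i)g(q)\,\mathrm{d}q=0$ and $\int_{v_i^{-1}(p)}^{q_2}[1-\pi(q,s_i)]g(q)\,\mathrm{d}q=0$.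
   Context: An ex-post rational buyer $i$ is willing to buy iff $v_i(q)\ge p$. Upon receiving 1, buyer $i$'s posterior density is $\pi(q,s_i)g(q)/\int_Q\pi(q',s_i)g(q')\,\mathrm{d}q'$; upon receiving 0 it is $[1-\pi(q,s_i)]g(q)/\int_Q[1-\pi(q',s_i)]g(q')\,\mathrm{d}q'$. *)

theory Defs
  imports "HOL-Analysis.Analysis"
begin

text \<open>Signals are indexed by naturals: signal 0 is s_0 (everybody receives 0),
  signal i (1 <= i <= n) is s_i (buyer i receives 1, all others 0).
  sig q j is the probability of signal j when the quality is q.\<close>

definition post_one :: "real set \<Rightarrow> (real \<Rightarrow> real) \<Rightarrow> (real \<Rightarrow> nat \<Rightarrow> real) \<Rightarrow> nat \<Rightarrow> real \<Rightarrow> real" where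
  "post_one Q g sig i q = sig q i * g q / (LINT q':Q|lborel. sig q' i * g q')"

definition post_zero :: "real set \<Rightarrow> (real \<Rightarrow> real) \<Rightarrow> (real \<Rightarrow> nat \<Rightarrow> real) \<Rightarrow> nat \<Rightarrow> real \<Rightarrow> real" where
  "post_zero Q g sig i q = (1 - sig q i) * g q / (LINT q':Q|lborel. (1 - sig q' i) * g q')"

text \<open>Obedience: an ex-post rational buyer i (willing iff v i q >= p) is almost surely
  willing after receiving 1 (posterior probability of being unwilling is 0) and almost surely
  unwilling after receiving 0 (posterior probability of being willing is 0).\<close>
definition obedient :: "nat \<Rightarrow> real set \<Rightarrow> (real \<Rightarrow> real) \<Rightarrow> (nat \<Rightarrow> real \<Rightarrow> real)
    \<Rightarrow> (real \<Rightarrow> nat \<Rightarrow> real) \<Rightarrow> real \<Rightarrow> bool" where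
  "obedient n Q g v sig p \<longleftrightarrow>
     (\<forall>i\<in>{1..n}.
        (LINT q:{q\<in>Q. v i q < p}|lborel. post_one Q g sig i q) = 0 \<and>
        (LINT q:{q\<in>Q. v i q \<ge> p}|lborel. post_zero Q g sig i q) = 0)"

end

theory Submission
  imports Defs
begin

lemma key_lemma:
  fixes h :: "real \<Rightarrow> real"
  assumes hi: "set_integrable lborel Q h" and hn: "\<And>x. x \<in> Q \<Longrightarrow> h x \<ge> 0"
    and AQ: "A \<subseteq> Q" and Am: "A \<in> sets lborel" and Qm: "Q \<in> sets lborel"
  shows "((LINT x:A|lborel. h x / (LINT x:Q|lborel. h x)) = 0) \<longleftrightarrow> ((LINT x:A|lborel. h x) = 0)"
proof -
  have nn: "(LINT x:B|lborel. h x) \<ge> 0" if "B \<subseteq> Q" for B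
    unfolding set_lebesgue_integral_def
    by (rule Bochner_Integration.integral_nonneg) (use that hn in \<open>auto simp: indicator_def\<close>)
  have iA: "set_integrable lborel A h" by (rule set_integrable_subset[OF hi Am AQ])
  have iB: "set_integrable lborel (Q - A) h" by (rule set_integrable_subset[OF hi]) (use Am Qm in auto)
  have "(LINT x:Q|lborel. h x) = (LINT x:A \<union> (Q - A)|lborel. h x)" using AQ by (simp add: Un_absorb1 Un_Diff_cancel)
  also have "\<dots> = (LINT x:A|lborel. h x) + (LINT x:Q - A|lborel. h x)"
    by (rule set_integral_Un) (use iA iB in auto)
  finally have sum: "(LINT x:Q|lborel. h x) = (LINT x:A|lborel. h x) + (LINT x:Q - A|lborel. h x)" .
  have "(LINT x:A|lborel. h x) \<ge> 0" using nn AQ by auto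
  moreover have "(LINT x:Q-A|lborel. h x) \<ge> 0" using nn by auto
  ultimately show ?thesis using sum by (auto simp: set_integral_divide_zero)
qed

theorem mainTheorem7:
  fixes n :: nat and q1 q2 p :: real and g :: "real \<Rightarrow> real"
    and v :: "nat \<Rightarrow> real \<Rightarrow> real" and sig :: "real \<Rightarrow> nat \<Rightarrow> real"
  assumes "q1 < q2"
    and g_nonneg: "\<And>q. q \<in> {q1..q2} \<Longrightarrow> g q \<ge> 0"
    and g_int: "set_integrable lborel {q1..q2} g"
    and g_one: "(LINT q:{q1..q2}|lborel. g q) = 1"
    and v_mono: "\<And>i. i \<in> {1..n} \<Longrightarrow> strict_mono_on {q1..q2} (v i)"
    and p_range: "\<And>i. i \<in> {1..n} \<Longrightarrow> p \<in> v i ` {q1..q2}"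
    and pi_meas: "\<And>j. j \<le> n \<Longrightarrow> (\<lambda>q. sig q j) \<in> borel_measurable lborel"
    and pi_nonneg: "\<And>q j. q \<in> {q1..q2} \<Longrightarrow> j \<le> n \<Longrightarrow> sig q j \<ge> 0"
    and pi_sum: "\<And>q. q \<in> {q1..q2} \<Longrightarrow> (\<Sum>i\<in>{1..n}. sig q i) + sig q 0 = 1"
  shows "obedient n {q1..q2} g v sig p \<longleftrightarrow>
    (\<forall>i\<in>{1..n}.
       (LINT q:{q1..the_inv_into {q1..q2} (v i) p}|lborel. sig q i * g q) = 0 \<and>
       (LINT q:{the_inv_into {q1..q2} (v i) p..q2}|lborel. (1 - sig q i) * g q) = 0)"
proof -
  let ?Q = "{q1..q2}"
  have gm: "(\<lambda>x. indicator ?Q x * g x) \<in> borel_measurable lborel"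
    using g_int unfolding set_integrable_def by (auto dest: borel_measurable_integrable)
  have per_i: "((LINT q:{q\<in>?Q. v i q < p}|lborel. post_one ?Q g sig i q) = 0 \<and>
        (LINT q:{q\<in>?Q. v i q \<ge> p}|lborel. post_zero ?Q g sig i q) = 0) \<longleftrightarrow>
       ((LINT q:{q1..the_inv_into ?Q (v i) p}|lborel. sig q i * g q) = 0 \<and>
       (LINT q:{the_inv_into ?Q (v i) p..q2}|lborel. (1 - sig q i) * g q) = 0)"
    if i: "i \<in> {1..n}" for i
  proof -
    define t where "t = the_inv_into ?Q (v i) p"
    have sm: "strict_mono_on ?Q (v i)" using v_mono i by auto
    have inj: "inj_on (v i) ?Q" using sm strict_mono_on_imp_inj_on by blast
    have tQ: "t \<in> ?Q" unfolding t_def using the_inv_into_into[OF inj p_range[OF i] subset_refl] .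
    have vt: "v i t = p" unfolding t_def using f_the_inv_into_f[OF inj p_range[OF i]] .
    have lt: "v i q < p \<longleftrightarrow> q < t" if "q \<in> ?Q" for q
    proof
      assume "v i q < p"
      show "q < t"
      proof (rule ccontr)
        assume "\<not> q < t" hence "t \<le> q" by simp
        hence "v i t \<le> v i q" using strict_mono_on_leD[OF sm tQ that] by simp
        thus False using vt \<open>v i q < p\<close> by simp
      qed
    next
      assume "q < t" thus "v i q < p" using sm tQ that vt unfolding strict_mono_on_def by auto
    qed
    have S1: "{q\<in>?Q. v i q < p} = {q1..<t}" using lt tQ by auto
    have S0: "{q\<in>?Q. v i q \<ge> p} = {t..q2}"
    proof (intro set_eqI iffI)
      fix x assume "x \<in> {q\<in>?Q. v i q \<ge> p}"
      thus "x \<in> {t..q2}" using lt[of x] by auto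
    next
      fix x assume x: "x \<in> {t..q2}"
      hence "x \<in> ?Q" using tQ by auto
      thus "x \<in> {q\<in>?Q. v i q \<ge> p}" using lt[of x] x by auto
    qed
    have sle: "sig q i \<le> 1" if "q \<in> ?Q" for q
    proof -
      have "sig q i \<le> (\<Sum>i\<in>{1..n}. sig q i)"
        by (rule member_le_sum) (use i pi_nonneg[OF that] in auto)
      moreover have "sig q 0 \<ge> 0" using pi_nonneg[OF that] by auto
      ultimately show ?thesis using pi_sum[OF that] by linarith
    qed
    have sn: "sig q i \<ge> 0" if "q \<in> ?Q" for q using pi_nonneg[OF that] i by auto
    have sim: "(\<lambda>q. sig q i) \<in> borel_measurable lborel" using pi_meas i by auto
    have m1: "set_borel_measurable lborel ?Q (\<lambda>q. sig q i * g q)"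
      unfolding set_borel_measurable_def
    proof -
      have "(\<lambda>x. sig x i * (indicator ?Q x * g x)) \<in> borel_measurable lborel"
        using sim gm by measurable
      thus "(\<lambda>x. indicator ?Q x *\<^sub>R (sig x i * g x)) \<in> borel_measurable lborel"
        by (simp add: mult_ac)
    qed
    have m0: "set_borel_measurable lborel ?Q (\<lambda>q. (1 - sig q i) * g q)"
      unfolding set_borel_measurable_def
    proof -
      have "(\<lambda>x. (1 - sig x i) * (indicator ?Q x * g x)) \<in> borel_measurable lborel"
        using sim gm by measurable
      thus "(\<lambda>x. indicator ?Q x *\<^sub>R ((1 - sig x i) * g x)) \<in> borel_measurable lborel"
        by (simp add: mult_ac)
    qed
    have i1: "set_integrable lborel ?Q (\<lambda>q. sig q i * g q)"
      by (rule set_integrable_bound[OF g_int m1])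
         (use sle sn g_nonneg in \<open>auto intro!: AE_I2 simp: abs_mult intro!: mult_left_le_one_le\<close>)
    have i0: "set_integrable lborel ?Q (\<lambda>q. (1 - sig q i) * g q)"
      by (rule set_integrable_bound[OF g_int m0])
         (use sle sn g_nonneg in \<open>auto intro!: AE_I2 simp: abs_mult intro!: mult_left_le_one_le\<close>)
    have k1: "((LINT q:{q1..<t}|lborel. post_one ?Q g sig i q) = 0) \<longleftrightarrow>
              ((LINT q:{q1..<t}|lborel. sig q i * g q) = 0)"
      unfolding post_one_def
      by (rule key_lemma[OF i1]) (use sn g_nonneg tQ in auto)
    have k0: "((LINT q:{t..q2}|lborel. post_zero ?Q g sig i q) = 0) \<longleftrightarrow>
              ((LINT q:{t..q2}|lborel. (1 - sig q i) * g q) = 0)"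
      unfolding post_zero_def
      by (rule key_lemma[OF i0]) (use sle g_nonneg tQ in auto)
    have eqs: "(LINT q:{q1..t}|lborel. sig q i * g q) = (LINT q:{q1..<t}|lborel. sig q i * g q)"
    proof (rule set_integral_cong_set)
      show "set_borel_measurable lborel {q1..<t} (\<lambda>q. sig q i * g q)"
        by (rule set_borel_measurable_subset[OF m1]) (use tQ in auto)
      show "set_borel_measurable lborel {q1..t} (\<lambda>q. sig q i * g q)"
        by (rule set_borel_measurable_subset[OF m1]) (use tQ in auto)
      show "AE x in lborel. (x \<in> {q1..<t}) = (x \<in> {q1..t})"
        using AE_lborel_singleton[of t] by eventually_elim auto
    qed
    show ?thesis using k1 k0 eqs S1 S0 by (simp add: t_def)
  qed
  show ?thesis unfolding obedient_def using per_i by blast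
qed

end
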